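(* Let $m\ge 2$ and let $X(0),X(1),\dots$ be i.i.d. random vectors in $\mathbb{R}^m$ whose components satisfy $X_{\min,i}\le X_i(k)\le X_{\max,i}$ almost surely, where $X_{\max,i}<\infty$ and $X_{\min,i}>-1$, and where at least one component is riskless, i.e. equal to a constant $r\ge 0$ almost surely. Fix an integer $n\ge 1$, let $\mathcal{X}_{n,i}:=\prod_{k=0}^{n-1}(1+X_i(k))-1$, $\mathcal{X}_n=(\mathcal{X}_{n,1},\dots,\mathcal{X}_{n,m})^T$, $\mathcal{K}:=\{K\in\mathbb{R}^m: K_i\ge 0,\ \sum_i K_i=1\}$ and $g_n(K):=\frac{1}{n}\mathbb{E}[\log(1+K^T\mathcal{X}_n)]$. Let $j\in\{1,\dots,m\}$ and let $e_j$ be the $j$th standard unit vector. Then $e_j$ is a maximizer of $g_n$ over $\mathcal{K}$ if and only if $$\mathbb{E}\left[\frac{1+X_i(0)}{1+X_j(0)}\right]\le 1\quad\text{for every } i\neq j.$$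
   Context: $X_i(k)$ is the return of asset $i$ at step $k$; components may be arbitrarily correlated. $n$ is the number of steps between rebalancings. A maximizer of $g_n$ over $\mathcal{K}$ is called a Kelly optimal feedback gain. *)

theory Defs
  imports "HOL-Probability.Probability"
begin

definition compound_return :: "(nat \<Rightarrow> 'a \<Rightarrow> real^'m) \<Rightarrow> nat \<Rightarrow> 'a \<Rightarrow> real^'m" where
  "compound_return X n \<omega> = (\<chi> i. (\<Prod>k<n. 1 + X k \<omega> $ i) - 1)"

definition gain_simplex :: "(real^'m) set" where
  "gain_simplex = {K. (\<forall>i. K $ i \<ge> 0) \<and> (\<Sum>i\<in>UNIV. K $ i) = 1}"

definition growth_rate :: "'a measure \<Rightarrow> (nat \<Rightarrow> 'a \<Rightarrow> real^'m) \<Rightarrow> nat \<Rightarrow> real^'m \<Rightarrow> real" where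
  "growth_rate M X n K = (1 / real n) * (\<integral>\<omega>. ln (1 + K \<bullet> compound_return X n \<omega>) \<partial>M)"

end

theory Submission
  imports Defs
begin

lemma ln_lower_aux:
  fixes u :: real assumes "\<bar>u\<bar> \<le> 1/2" shows "u - 2*u^2 \<le> ln (1+u)"
proof (cases "u \<ge> 0")
  case True
  then have "u - u^2 \<le> ln(1+u)" using assms by (intro ln_one_plus_pos_lower_bound) auto
  then show ?thesis by (smt (verit) zero_le_power2)
next
  case False
  then have "-(-u) - 2*(-u)^2 \<le> ln (1 - (-u))" using assms by (intro ln_one_minus_pos_lower_bound) auto
  then show ?thesis by simp
qed

theorem theorem2:
  fixes M :: "'a measure" and X :: "nat \<Rightarrow> 'a \<Rightarrow> real^'m"
    and Xmin Xmax :: "'m \<Rightarrow> real" and n :: nat and j :: 'm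
  assumes "prob_space M"
    and "CARD('m) \<ge> 2"
    and meas: "\<And>k. X k \<in> borel_measurable M"
    and indep: "prob_space.indep_vars M (\<lambda>_. borel) X UNIV"
    and ident: "\<And>k. distr M borel (X k) = distr M borel (X 0)"
    and bounds: "\<And>k. AE \<omega> in M. \<forall>i. Xmin i \<le> X k \<omega> $ i \<and> X k \<omega> $ i \<le> Xmax i"
    and Xmin_gt: "\<And>i. Xmin i > -1"
    and riskless: "\<exists>i0 r. r \<ge> 0 \<and> (\<forall>k. AE \<omega> in M. X k \<omega> $ i0 = r)"
    and "n \<ge> 1"
  shows "(axis j 1 \<in> gain_simplex \<and>
          (\<forall>K\<in>gain_simplex. growth_rate M X n K \<le> growth_rate M X n (axis j 1)))
     \<longleftrightarrow> (\<forall>i. i \<noteq> j \<longrightarrow>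
          (\<integral>\<omega>. (1 + X 0 \<omega> $ i) / (1 + X 0 \<omega> $ j) \<partial>M) \<le> 1)"
proof -
  interpret prob_space M by fact
  note meas[measurable]
  have Xc[measurable]: "(\<lambda>\<omega>. X k \<omega> $ i) \<in> borel_measurable M" for k i
    by (rule measurable_compose[OF meas borel_measurable_nth])
  define lo where "lo = Min (range (\<lambda>i. 1 + Xmin i))"
  define hi where "hi = Max (range (\<lambda>i. 1 + Xmax i))"
  have lo_pos: "0 < lo" proof -
    have "\<And>i. 0 < 1 + Xmin i" using Xmin_gt by (smt (verit))
    then show ?thesis unfolding lo_def by (subst Min_gr_iff) auto
  qed
  have lo_le: "\<And>i. lo \<le> 1 + Xmin i" unfolding lo_def by (intro Min_le) auto
  have hi_ge: "\<And>i. 1 + Xmax i \<le> hi" unfolding hi_def by (intro Max_ge) auto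
  define G where "G \<omega> \<longleftrightarrow> (\<forall>k i. lo \<le> 1 + X k \<omega> $ i \<and> 1 + X k \<omega> $ i \<le> hi)" for \<omega>
  have AEG: "AE \<omega> in M. G \<omega>"
  proof -
    have "AE \<omega> in M. \<forall>k. \<forall>i. Xmin i \<le> X k \<omega> $ i \<and> X k \<omega> $ i \<le> Xmax i"
      using bounds by (subst AE_all_countable) auto
    then show ?thesis
    proof eventually_elim
      case (elim \<omega>)
      show ?case unfolding G_def
      proof (intro allI conjI)
        fix k i
        have "Xmin i \<le> X k \<omega> $ i \<and> X k \<omega> $ i \<le> Xmax i" using elim by blast
        then show "lo \<le> 1 + X k \<omega> $ i" "1 + X k \<omega> $ i \<le> hi"
          using lo_le[of i] hi_ge[of i] by linarith+
      qed
    qed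
  qed
  define W where "W = (\<lambda>i \<omega>. \<Prod>k<n. 1 + X k \<omega> $ i)"
  have W_bounds: "lo^n \<le> W i \<omega> \<and> W i \<omega> \<le> hi^n" if "G \<omega>" for i \<omega>
  proof -
    have "(\<Prod>k<n. lo) \<le> W i \<omega>" unfolding W_def
      using lo_pos that by (intro prod_mono) (auto simp: G_def)
    moreover have "W i \<omega> \<le> (\<Prod>k<n. hi)" unfolding W_def
      using lo_pos that by (intro prod_mono) (auto simp: G_def intro: order_trans[of 0 lo])
    ultimately show ?thesis by simp
  qed
  have W_pos: "0 < W i \<omega>" if "G \<omega>" for i \<omega>
    using W_bounds[OF that, of i] lo_pos by (smt (verit) zero_less_power)
  define S where "S = (\<lambda>(K::real^'m) \<omega>. \<Sum>l\<in>UNIV. K $ l * W l \<omega>)"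
  have S_eq: "1 + K \<bullet> compound_return X n \<omega> = S K \<omega>" if "K \<in> gain_simplex" for K \<omega>
    using that unfolding compound_return_def inner_vec_def gain_simplex_def S_def W_def
    by (simp add: right_diff_distrib sum_subtractf)
  have S_bounds: "lo^n \<le> S K \<omega> \<and> S K \<omega> \<le> hi^n" if "K \<in> gain_simplex" "G \<omega>" for K \<omega>
  proof -
    have K: "\<And>l. 0 \<le> K $ l" "(\<Sum>l\<in>UNIV. K $ l) = 1" using that(1) by (auto simp: gain_simplex_def)
    have "lo^n = (\<Sum>l\<in>UNIV. K $ l * lo^n)" using K by (simp add: sum_distrib_right[symmetric])
    also have "\<dots> \<le> S K \<omega>" unfolding S_def
      using W_bounds[OF that(2)] K by (intro sum_mono mult_left_mono) auto
    finally have 1: "lo^n \<le> S K \<omega>" .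
    have "S K \<omega> \<le> (\<Sum>l\<in>UNIV. K $ l * hi^n)" unfolding S_def
      using W_bounds[OF that(2)] K by (intro sum_mono mult_left_mono) auto
    also have "\<dots> = hi^n" using K by (simp add: sum_distrib_right[symmetric])
    finally show ?thesis using 1 by simp
  qed
  have growth_eq: "growth_rate M X n K = (1 / real n) * (\<integral>\<omega>. ln (S K \<omega>) \<partial>M)"
    if "K \<in> gain_simplex" for K
    unfolding growth_rate_def using S_eq[OF that] by simp
  have ej: "axis j 1 \<in> gain_simplex"
    by (auto simp: gain_simplex_def axis_def)
  have S_ej: "S (axis j 1) \<omega> = W j \<omega>" for \<omega>
  proof -
    have "(\<lambda>l. axis j 1 $ l * W l \<omega>) = (\<lambda>l. if l = j then W l \<omega> else 0)"
      by (auto simp: axis_def)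
    then show ?thesis unfolding S_def by (simp only:) simp
  qed
  have int_lnS: "integrable M (\<lambda>\<omega>. ln (S K \<omega>))" if "K \<in> gain_simplex" for K
  proof (rule integrable_const_bound[where B="\<bar>ln (lo^n)\<bar> + \<bar>ln (hi^n)\<bar>"])
    show "AE \<omega> in M. norm (ln (S K \<omega>)) \<le> \<bar>ln (lo^n)\<bar> + \<bar>ln (hi^n)\<bar>"
      using AEG
    proof eventually_elim
      case (elim \<omega>)
      note b = S_bounds[OF that elim]
      have p: "0 < lo^n" using lo_pos by simp
      then have "0 < S K \<omega>" "0 < hi^n" using b by linarith+
      then have "ln (lo^n) \<le> ln (S K \<omega>)" "ln (S K \<omega>) \<le> ln (hi^n)"
        using b p by simp_all
      then show ?case by simp
    qed
    show "(\<lambda>\<omega>. ln (S K \<omega>)) \<in> borel_measurable M" unfolding S_def W_def by measurable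
  qed
  have int_lnW: "integrable M (\<lambda>\<omega>. ln (W j \<omega>))"
    using int_lnS[OF ej] by (simp add: S_ej)
  define Y where "Y = (\<lambda>i k \<omega>. (1 + X k \<omega> $ i) / (1 + X k \<omega> $ j))"
  have Y_bounds: "0 \<le> Y i k \<omega> \<and> Y i k \<omega> \<le> hi / lo" if "G \<omega>" for i k \<omega>
  proof -
    have a: "lo \<le> 1 + X k \<omega> $ i" "1 + X k \<omega> $ i \<le> hi" "lo \<le> 1 + X k \<omega> $ j"
      using that by (auto simp: G_def)
    then show ?thesis unfolding Y_def using lo_pos
      by (auto intro!: frac_le divide_nonneg_nonneg)
  qed
  have Y_meas[measurable]: "Y i k \<in> borel_measurable M" for i k unfolding Y_def by measurable
  have int_Y: "integrable M (Y i k)" for i k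
  proof (rule integrable_const_bound[where B="hi / lo"])
    show "AE \<omega> in M. norm (Y i k \<omega>) \<le> hi / lo"
      using AEG by eventually_elim (use Y_bounds in auto)
  qed simp
  have EY: "(\<integral>\<omega>. Y i k \<omega> \<partial>M) = (\<integral>\<omega>. Y i 0 \<omega> \<partial>M)" for i k
  proof -
    let ?h = "\<lambda>v::real^'m. (1 + v $ i) / (1 + v $ j)"
    have "(\<integral>\<omega>. Y i k \<omega> \<partial>M) = integral\<^sup>L (distr M borel (X k)) ?h"
      by (subst integral_distr) (auto simp: Y_def)
    also have "\<dots> = integral\<^sup>L (distr M borel (X 0)) ?h"
      by (subst ident[of k]) (rule refl)
    also have "\<dots> = (\<integral>\<omega>. Y i 0 \<omega> \<partial>M)"
      by (subst integral_distr) (auto simp: Y_def)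
    finally show ?thesis .
  qed
  define R where "R = (\<lambda>i \<omega>. W i \<omega> / W j \<omega>)"
  have R_prod: "R i \<omega> = (\<Prod>k<n. Y i k \<omega>)" for i \<omega>
    by (simp add: R_def W_def Y_def prod_dividef)
  have indY: "indep_vars (\<lambda>_. borel) (Y i) {..<n}" for i
  proof -
    have "indep_vars (\<lambda>_. borel) (\<lambda>k \<omega>. (\<lambda>v::real^'m. (1 + v $ i) / (1 + v $ j)) (X k \<omega>)) UNIV"
      by (rule indep_vars_compose2[OF indep]) measurable
    then have "indep_vars (\<lambda>_. borel) (Y i) UNIV" by (simp add: Y_def)
    then show ?thesis by (rule indep_vars_subset) auto
  qed
  have R_fun: "R i = (\<lambda>\<omega>. \<Prod>k<n. Y i k \<omega>)" for i
    by (rule ext) (rule R_prod)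
  have int_R: "integrable M (R i)" for i
    unfolding R_fun by (rule indep_vars_integrable[OF _ indY int_Y]) auto
  have ER: "(\<integral>\<omega>. R i \<omega> \<partial>M) = (\<integral>\<omega>. Y i 0 \<omega> \<partial>M) ^ n" for i
  proof -
    have "(\<integral>\<omega>. R i \<omega> \<partial>M) = (\<Prod>k<n. (\<integral>\<omega>. Y i k \<omega> \<partial>M))"
      unfolding R_fun by (rule indep_vars_lebesgue_integral[OF _ indY int_Y]) auto
    also have "\<dots> = (\<Prod>k<n. (\<integral>\<omega>. Y i 0 \<omega> \<partial>M))"
      by (rule prod.cong[OF refl]) (rule EY)
    finally show ?thesis by simp
  qed
  have R_bounds: "0 \<le> R i \<omega> \<and> R i \<omega> \<le> hi^n / lo^n" if "G \<omega>" for i \<omega>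
    using W_bounds[OF that, of i] W_bounds[OF that, of j] W_pos[OF that, of i] W_pos[OF that, of j] lo_pos
    unfolding R_def by (auto intro!: frac_le)
  have EYj: "(\<integral>\<omega>. Y j 0 \<omega> \<partial>M) = 1"
  proof -
    have "AE \<omega> in M. Y j 0 \<omega> = 1"
      using AEG
    proof eventually_elim
      case (elim \<omega>)
      then have "lo \<le> 1 + X 0 \<omega> $ j" by (simp add: G_def)
      then have "1 + X 0 \<omega> $ j \<noteq> 0" using lo_pos by linarith
      then show ?case by (simp add: Y_def)
    qed
    then have "(\<integral>\<omega>. Y j 0 \<omega> \<partial>M) = (\<integral>\<omega>. 1 \<partial>M)" by (intro integral_cong_AE) simp_all
    then show ?thesis by (simp add: prob_space)
  qed
  have eall: "axis l 1 \<in> gain_simplex" for l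
    by (auto simp: gain_simplex_def axis_def)
  have S_e: "S (axis l 1) \<omega> = W l \<omega>" for l \<omega>
  proof -
    have "(\<lambda>l'. axis l 1 $ l' * W l' \<omega>) = (\<lambda>l'. if l' = l then W l' \<omega> else 0)"
      by (auto simp: axis_def)
    then show ?thesis unfolding S_def by (simp only:) simp
  qed
  have Wj_int: "growth_rate M X n (axis j 1) = (1 / real n) * (\<integral>\<omega>. ln (W j \<omega>) \<partial>M)"
    using growth_eq[OF ej] by (simp add: S_e)
  have n_pos: "0 < real n" using \<open>n \<ge> 1\<close> by simp
  show ?thesis
  proof
    assume opt: "axis j 1 \<in> gain_simplex \<and>
          (\<forall>K\<in>gain_simplex. growth_rate M X n K \<le> growth_rate M X n (axis j 1))"
    show "\<forall>i. i \<noteq> j \<longrightarrow> (\<integral>\<omega>. (1 + X 0 \<omega> $ i) / (1 + X 0 \<omega> $ j) \<partial>M) \<le> 1"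
    proof (intro allI impI)
      fix i assume "i \<noteq> j"
      show "(\<integral>\<omega>. (1 + X 0 \<omega> $ i) / (1 + X 0 \<omega> $ j) \<partial>M) \<le> 1"
      proof (rule ccontr)
        assume nle: "\<not> (\<integral>\<omega>. (1 + X 0 \<omega> $ i) / (1 + X 0 \<omega> $ j) \<partial>M) \<le> 1"
        define c where "c = (\<integral>\<omega>. Y i 0 \<omega> \<partial>M)"
        have c_gt: "1 < c" using nle by (simp add: c_def Y_def)
        have ER1: "1 < (\<integral>\<omega>. R i \<omega> \<partial>M)"
          unfolding ER c_def[symmetric] using c_gt \<open>n \<ge> 1\<close> by (intro one_less_power) auto
        define d where "d = (\<integral>\<omega>. R i \<omega> \<partial>M) - 1"
        have d_pos: "0 < d" using ER1 d_def by simp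
        define B where "B = \<bar>hi^n / lo^n\<bar> + 1"
        have B1: "1 \<le> B" by (simp add: B_def)
        have B_pos: "0 < B" using B1 by simp
        have RB: "\<bar>R i \<omega> - 1\<bar> \<le> B" if "G \<omega>" for \<omega>
          using R_bounds[OF that, of i] abs_ge_self[of "hi^n/lo^n"] unfolding B_def
          by (smt (verit))
        define t where "t = min (1/(2*B)) (d/(4*B^2))"
        have t_pos: "0 < t" using B_pos d_pos by (simp add: t_def)
        have t_le: "t \<le> 1/(2*B)" "t \<le> d/(4*B^2)" by (simp_all add: t_def)
        have tB: "t * B \<le> 1/2"
        proof -
          have "t * B \<le> 1/(2*B) * B" using t_le(1) B_pos by (intro mult_right_mono) auto
          also have "\<dots> = 1/2" using B_pos by simp
          finally show ?thesis .
        qed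
        have "1/(2*B) \<le> 1/2" using B1 by (intro divide_left_mono) auto
        then have t1: "t \<le> 1" using t_le(1) by linarith
        have tBd: "t * B^2 \<le> d / 4"
        proof -
          have "t * B^2 \<le> d/(4*B^2) * B^2" using t_le(2) by (intro mult_right_mono) auto
          also have "\<dots> = d / 4" using B_pos by simp
          finally show ?thesis .
        qed
        have key: "t * (2 * (t * B^2)) < t * d"
          using tBd d_pos t_pos by (intro mult_strict_left_mono) auto
        have keq: "t * (2 * (t * B^2)) = 2 * (t^2 * B^2)" by (simp add: power2_eq_square)
        define Kt :: "real^'m" where "Kt = (1 - t) *\<^sub>R axis j 1 + t *\<^sub>R axis i 1"
        have comp: "Kt $ l = (1-t) * axis j 1 $ l + t * axis i 1 $ l" for l
          by (simp add: Kt_def)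
        have Kt: "Kt \<in> gain_simplex"
        proof -
          have sj: "(\<Sum>l\<in>UNIV. axis j 1 $ l) = (1::real)" "(\<Sum>l\<in>UNIV. axis i 1 $ l) = (1::real)"
            using eall[of j] eall[of i] by (simp_all only: gain_simplex_def mem_Collect_eq)
          have "(\<Sum>l\<in>UNIV. Kt $ l) = (1-t) * (\<Sum>l\<in>UNIV. axis j 1 $ l) + t * (\<Sum>l\<in>UNIV. axis i 1 $ l)"
            unfolding comp by (simp only: sum.distrib sum_distrib_left)
          also have "\<dots> = 1" unfolding sj by simp
          finally show ?thesis using t1 t_pos unfolding gain_simplex_def
            by (auto simp: comp axis_def)
        qed
        have S_Kt: "S Kt \<omega> = (1-t) * W j \<omega> + t * W i \<omega>" for \<omega>
        proof -
          have "S Kt \<omega> = (\<Sum>l\<in>UNIV. (1-t) * (axis j 1 $ l * W l \<omega>) + t * (axis i 1 $ l * W l \<omega>))"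
            unfolding S_def comp by (simp only: algebra_simps)
          also have "\<dots> = (1-t) * S (axis j 1) \<omega> + t * S (axis i 1) \<omega>"
            unfolding S_def by (simp only: sum.distrib sum_distrib_left)
          finally show ?thesis by (simp add: S_e)
        qed
        define C where "C = t + 2*t^2*B^2"
        have pw: "AE \<omega> in M. ln (W j \<omega>) + t * R i \<omega> - C \<le> ln (S Kt \<omega>)"
          using AEG
        proof eventually_elim
          case (elim \<omega>)
          define u where "u = t * (R i \<omega> - 1)"
          have Wj: "0 < W j \<omega>" using W_pos[OF elim] .
          have Seq: "S Kt \<omega> = W j \<omega> * (1 + u)"
            using Wj by (simp add: S_Kt u_def R_def field_simps)
          have uabs: "\<bar>u\<bar> \<le> t * B"
            unfolding u_def abs_mult using t_pos RB[OF elim] by (simp add: mult_left_mono)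
          then have uh: "\<bar>u\<bar> \<le> 1/2" using tB by linarith
          have u2: "u^2 \<le> (t*B)^2"
            using power_mono[OF uabs abs_ge_zero, of 2] by simp
          have "u - 2*u^2 \<le> ln (1+u)" by (rule ln_lower_aux[OF uh])
          moreover have "ln (S Kt \<omega>) = ln (W j \<omega>) + ln (1 + u)"
            unfolding Seq using Wj uh by (subst ln_mult) auto
          moreover have "u = t * R i \<omega> - t" by (simp add: u_def algebra_simps)
          moreover have "(t*B)^2 = t^2*B^2" by (simp add: power_mult_distrib)
          moreover have "C = t + 2*(t^2*B^2)" by (simp add: C_def)
          ultimately show ?case using u2 by linarith
        qed
        have I1: "(\<integral>\<omega>. ln (W j \<omega>) + t * R i \<omega> - C \<partial>M) \<le> (\<integral>\<omega>. ln (S Kt \<omega>) \<partial>M)"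
          by (rule integral_mono_AE[OF _ int_lnS[OF Kt] pw])
             (intro Bochner_Integration.integrable_diff Bochner_Integration.integrable_add
               integrable_mult_right int_lnW int_R integrable_const)
        have I2: "(\<integral>\<omega>. ln (W j \<omega>) + t * R i \<omega> - C \<partial>M)
            = (\<integral>\<omega>. ln (W j \<omega>) \<partial>M) + t * (\<integral>\<omega>. R i \<omega> \<partial>M) - C"
          using int_lnW int_R[of i] by (simp add: prob_space)
        have "(\<integral>\<omega>. ln (W j \<omega>) \<partial>M) < (\<integral>\<omega>. ln (S Kt \<omega>) \<partial>M)"
        proof -
          have "t * (\<integral>\<omega>. R i \<omega> \<partial>M) = t * d + t" by (simp add: d_def algebra_simps)
          moreover have "C = t + 2*(t^2*B^2)" by (simp add: C_def)
          ultimately show ?thesis using I1 I2 key keq by linarith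
        qed
        then have "growth_rate M X n (axis j 1) < growth_rate M X n Kt"
          unfolding Wj_int growth_eq[OF Kt] using n_pos by (intro mult_strict_left_mono) auto
        with opt Kt show False by auto
      qed
    qed
  next
    assume H: "\<forall>i. i \<noteq> j \<longrightarrow> (\<integral>\<omega>. (1 + X 0 \<omega> $ i) / (1 + X 0 \<omega> $ j) \<partial>M) \<le> 1"
    have EYle: "(\<integral>\<omega>. Y i 0 \<omega> \<partial>M) \<le> 1" for i
      using H EYj by (cases "i = j") (auto simp: Y_def)
    have ERle: "(\<integral>\<omega>. R i \<omega> \<partial>M) \<le> 1" for i
    proof -
      have "0 \<le> (\<integral>\<omega>. Y i 0 \<omega> \<partial>M)"
        by (rule integral_nonneg_AE) (use AEG Y_bounds in auto)
      then show ?thesis unfolding ER using EYle[of i] by (rule power_le_one)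
    qed
    show "axis j 1 \<in> gain_simplex \<and>
          (\<forall>K\<in>gain_simplex. growth_rate M X n K \<le> growth_rate M X n (axis j 1))"
    proof (intro conjI ballI ej)
      fix K :: "real^'m" assume K: "K \<in> gain_simplex"
      have Kc: "\<And>l. 0 \<le> K $ l" "(\<Sum>l\<in>UNIV. K $ l) = 1" using K by (auto simp: gain_simplex_def)
      have pw: "AE \<omega> in M. ln (S K \<omega>) \<le> ln (W j \<omega>) + (\<Sum>l\<in>UNIV. K $ l * R l \<omega>) - 1"
        using AEG
      proof eventually_elim
        case (elim \<omega>)
        have Wj: "0 < W j \<omega>" using W_pos[OF elim] .
        have Sp: "0 < S K \<omega>" using S_bounds[OF K elim] lo_pos
          by (smt (verit) zero_less_power)
        have q: "S K \<omega> / W j \<omega> = (\<Sum>l\<in>UNIV. K $ l * R l \<omega>)"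
          by (simp add: S_def R_def sum_divide_distrib)
        have "ln (S K \<omega> / W j \<omega>) \<le> S K \<omega> / W j \<omega> - 1"
          using Sp Wj by (intro ln_le_minus_one) simp
        moreover have "ln (S K \<omega> / W j \<omega>) = ln (S K \<omega>) - ln (W j \<omega>)"
          using Sp Wj by (simp add: ln_div)
        ultimately show ?case unfolding q by simp
      qed
      have intS: "integrable M (\<lambda>x. \<Sum>l\<in>UNIV. K $ l * R l x)"
        by (rule Bochner_Integration.integrable_sum) (use int_R in auto)
      have "(\<integral>\<omega>. ln (S K \<omega>) \<partial>M) \<le> (\<integral>\<omega>. ln (W j \<omega>) + (\<Sum>l\<in>UNIV. K $ l * R l \<omega>) - 1 \<partial>M)"
        by (rule integral_mono_AE[OF int_lnS[OF K] _ pw])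
           (intro Bochner_Integration.integrable_diff Bochner_Integration.integrable_add
               intS int_lnW integrable_const)
      also have "\<dots> = (\<integral>\<omega>. ln (W j \<omega>) \<partial>M) + (\<Sum>l\<in>UNIV. K $ l * (\<integral>\<omega>. R l \<omega> \<partial>M)) - 1"
        using int_lnW intS int_R by (simp add: prob_space integral_sum)
      also have "\<dots> \<le> (\<integral>\<omega>. ln (W j \<omega>) \<partial>M) + (\<Sum>l\<in>UNIV. K $ l * 1) - 1"
        using Kc ERle by (intro add_mono diff_mono order_refl sum_mono mult_left_mono) auto
      also have "\<dots> = (\<integral>\<omega>. ln (W j \<omega>) \<partial>M)" using Kc by simp
      finally have "(\<integral>\<omega>. ln (S K \<omega>) \<partial>M) \<le> (\<integral>\<omega>. ln (W j \<omega>) \<partial>M)" .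
      then show "growth_rate M X n K \<le> growth_rate M X n (axis j 1)"
        unfolding Wj_int growth_eq[OF K] using n_pos by (intro mult_left_mono) auto
    qed
  qed
qed

end
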